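(* Let $\mathbf V$ be a monoid variety satisfying the identity $x^n\approx x^{n+1}$ for some $n\in\mathbb N$. If $M_\gamma(xx^+yy^+)\notin\mathbf V$, then $\mathbf V$ satisfies the identity $x^ny^n\approx (x^ny^n)^n$.
   Context: Words are elements of the free monoid $\mathfrak X^\ast$ over a countably infinite alphabet $\mathfrak X$. For a word $\mathbf w$, a letter is simple in $\mathbf w$ if it occurs exactly once. The congruence $\gamma$ on $\mathfrak X^\ast$ is defined by: $\mathbf u\mathrel\gamma\mathbf v$ iff $\mathbf u$ and $\mathbf v$ have the same set of simple letters and $\mathbf u$ can be obtained from $\mathbf v$ by changing the individual exponents of letters (i.e. $\mathbf u=x_1^{e_1}\cdots x_r^{e_r}$, $\mathbf v=x_1^{f_1}\cdots x_r^{f_r}$ with letters $x_i$ and $e_i,f_i\ge1$). For $\gamma$-classes $\mathtt u,\mathtt v$ write $\mathtt v\le\mathtt u$ if $\mathtt u=\mathtt p\mathtt v\mathtt s$ for some $\gamma$-classes $\mathtt p,\mathtt s$. For a set $\mathtt W$ of $\gamma$-classes, $M_\gamma(\mathtt W)$ is the Rees quotient of $\mathfrak X^\ast/\gamma$ by the ideal of all $\gamma$-classes not $\le$ any member of $\mathtt W$. $\gamma$-classes are written as regular expressions with $x^+=\{x^k\mid k\ge1\}$; thus $xx^+yy^+$ is the $\gamma$-class of $x^2y^2$, namely $\{x^ay^b\mid a,b\ge2\}$, and $M_\gamma(xx^+yy^+)=M_\gamma(\{xx^+yy^+\})$. *)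

theory Defs
  imports Main
begin

type_synonym word = "nat list"

definition simple_letters :: "word \<Rightarrow> nat set" where
  "simple_letters w = {x. count_list w x = 1}"

text \<open>The congruence gamma: same simple letters and same sequence
  x1 ... xr of letters up to individual exponents, i.e. the words agree
  after collapsing runs of equal adjacent letters.\<close>
definition gamma :: "word \<Rightarrow> word \<Rightarrow> bool" where
  "gamma u v \<longleftrightarrow> simple_letters u = simple_letters v \<and> remdups_adj u = remdups_adj v"

definition subst :: "(nat \<Rightarrow> word) \<Rightarrow> word \<Rightarrow> word" where
  "subst \<sigma> w = concat (map \<sigma> w)"

text \<open>Identity u = v holds in the variety with equational theory T.\<close>
definition fully_invariant_congruence :: "(word \<times> word) set \<Rightarrow> bool" where
  "fully_invariant_congruence T \<longleftrightarrow>
     equiv UNIV T \<and>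
     (\<forall>u v p s. (u, v) \<in> T \<longrightarrow> (p @ u @ s, p @ v @ s) \<in> T) \<and>
     (\<forall>u v \<sigma>. (u, v) \<in> T \<longrightarrow> (subst \<sigma> u, subst \<sigma> v) \<in> T)"

text \<open>The letters x and y are 0 and 1; the generating class xx^+yy^+ is the
  gamma-class of x^2 y^2.  A word w represents a nonzero element of
  M_gamma(xx^+yy^+) iff its gamma-class is <= that class.\<close>
definition MW_nonzero :: "word \<Rightarrow> bool" where
  "MW_nonzero w \<longleftrightarrow> (\<exists>p s. gamma [0,0,1,1] (p @ w @ s))"

text \<open>Equality of the images of two words in M_gamma(xx^+yy^+)
  (Rees quotient: all words of the ideal are identified with 0).\<close>
definition MW_eq :: "word \<Rightarrow> word \<Rightarrow> bool" where
  "MW_eq a b \<longleftrightarrow> (MW_nonzero a \<longleftrightarrow> MW_nonzero b) \<and> (MW_nonzero a \<longrightarrow> gamma a b)"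

text \<open>M_gamma(xx^+yy^+) satisfies u = v: every homomorphism from the free monoid
  into it factors as a substitution followed by the quotient map.\<close>
definition MW_satisfies :: "word \<Rightarrow> word \<Rightarrow> bool" where
  "MW_satisfies u v \<longleftrightarrow> (\<forall>\<sigma>. MW_eq (subst \<sigma> u) (subst \<sigma> v))"

definition MW_in :: "(word \<times> word) set \<Rightarrow> bool" where
  "MW_in T \<longleftrightarrow> (\<forall>(u, v) \<in> T. MW_satisfies u v)"

definition wpow :: "word \<Rightarrow> nat \<Rightarrow> word" where
  "wpow w k = concat (replicate k w)"

end

theory Submission
  imports Defs
begin

lemma wpow_0[simp]: "wpow w 0 = []" by (simp add: wpow_def)
lemma wpow_Suc[simp]: "wpow w (Suc k) = w @ wpow w k" by (simp add: wpow_def)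
lemma wpow_add: "wpow w (a + b) = wpow w a @ wpow w b" by (induct a) auto
lemma wpow_1[simp]: "wpow w (Suc 0) = w" by simp
lemma wpow_mult: "wpow (wpow w a) b = wpow w (a * b)"
  by (induct b) (auto simp: wpow_add)

lemma subst_append[simp]: "subst s (a @ b) = subst s a @ subst s b" by (simp add: subst_def)
lemma subst_Nil[simp]: "subst s [] = []" by (simp add: subst_def)
lemma subst_Cons[simp]: "subst s (c # b) = s c @ subst s b" by (simp add: subst_def)
lemma subst_wpow: "subst s (wpow w k) = wpow (subst s w) k" by (induct k) auto
lemma subst_subst: "subst t (subst s w) = subst (\<lambda>c. subst t (s c)) w" by (induct w) auto
lemma subst_count: "subst (\<lambda>d. if d = c then w else []) v = wpow w (count_list v c)"
  by (induct v) auto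

fun c10 :: "word \<Rightarrow> nat" where
  "c10 (a # b # xs) = (if a = 1 \<and> b = 0 then 1 else 0) + c10 (b # xs)"
| "c10 _ = 0"

lemma c10_sorted: "set w \<subseteq> {0,1} \<Longrightarrow> c10 w = 0 \<longleftrightarrow> sorted w"
  by (induct w rule: c10.induct) auto

locale fic =
  fixes T :: "(word \<times> word) set"
  assumes F: "fully_invariant_congruence T"
begin
lemma rfl: "(u,u) \<in> T" using F unfolding fully_invariant_congruence_def equiv_def
  by (auto dest: refl_onD)
lemma sym': "(u,v) \<in> T \<Longrightarrow> (v,u) \<in> T" using F unfolding fully_invariant_congruence_def equiv_def
  by (auto dest: symD)
lemma trans': "(u,v) \<in> T \<Longrightarrow> (v,w) \<in> T \<Longrightarrow> (u,w) \<in> T" using F unfolding fully_invariant_congruence_def equiv_def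
  by (auto dest: transD)
lemma ctx: "(u,v) \<in> T \<Longrightarrow> (p @ u @ s, p @ v @ s) \<in> T" using F unfolding fully_invariant_congruence_def
  by auto
lemma ctxL: "(u,v) \<in> T \<Longrightarrow> (p @ u, p @ v) \<in> T" using ctx[of u v p "[]"] by simp
lemma ctxR: "(u,v) \<in> T \<Longrightarrow> (u @ s, v @ s) \<in> T" using ctx[of u v "[]" s] by simp
lemma sub: "(u,v) \<in> T \<Longrightarrow> (subst s u, subst s v) \<in> T" using F unfolding fully_invariant_congruence_def
  by auto

context
  fixes n :: nat
  assumes H: "(wpow [0] n, wpow [0] (n + 1)) \<in> T"
begin

lemma pow1: "(wpow w (n+1), wpow w n) \<in> T"
  using sub[OF H, of "\<lambda>_. w"] sym' by (simp add: subst_wpow)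

lemma powT: "(wpow w (n+k), wpow w n) \<in> T"
proof (induct k)
  case 0 then show ?case by (simp add: rfl)
next
  case (Suc k)
  have "(wpow w (n+1) @ wpow w k, wpow w n @ wpow w k) \<in> T" using ctxR[OF pow1] .
  then have "(wpow w (n + Suc k), wpow w (n+k)) \<in> T"
    by (metis add.commute add_Suc_right plus_1_eq_Suc wpow_add)
  then show ?case using Suc trans' by blast
qed

lemma pow_red:
  assumes "(wpow w a, wpow w b) \<in> T" "a < b" "a \<le> 1"
  shows "(w, wpow w n) \<in> T"
proof -
  obtain c where c: "c \<ge> 1" "(w, wpow w (1 + c)) \<in> T"
  proof (cases "a = 0")
    case True
    then show ?thesis using that[of b] ctxL[OF assms(1), of w] assms(2)
      by (simp flip: wpow_add)
  next
    case False
    then have "a = 1" using assms by simp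
    then show ?thesis using that[of "b - 1"] assms by simp
  qed
  have I: "(w, wpow w (1 + t * c)) \<in> T" for t
  proof (induct t)
    case 0 then show ?case by (simp add: rfl)
  next
    case (Suc t)
    have "(wpow w (t*c) @ wpow w (1 + c), wpow w (t*c) @ w) \<in> T"
      using ctxL[OF sym'[OF c(2)]] .
    moreover have "wpow w (t*c) @ wpow w (1 + c) = wpow w (1 + Suc t * c)"
    proof -
      have "1 + Suc t * c = t*c + (1+c)" by simp
      then show ?thesis by (simp only: wpow_add)
    qed
    moreover have "wpow w (t*c) @ w = wpow w (1 + t * c)"
    proof -
      have "1 + t * c = t*c + 1" by simp
      then show ?thesis by (simp only: wpow_add wpow_1 One_nat_def)
    qed
    ultimately have "(wpow w (1 + Suc t * c), wpow w (1 + t * c)) \<in> T" by simp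
    then show ?case using trans'[OF Suc sym'] by blast
  qed
  have nc: "n \<le> n * c" using c(1) by simp
  have eq: "1 + n * c = n + (1 + n*c - n)" using nc by linarith
  have "(wpow w (1 + n*c), wpow w n) \<in> T" by (subst eq) (rule powT)
  then show ?thesis using I trans' by blast
qed

lemma XX: "(wpow w n @ wpow w n, wpow w n) \<in> T"
  using powT[of w n] by (simp add: wpow_add)

lemma chain:
  fixes P :: word
  defines "h \<equiv> (\<lambda>c. if c = 0 then wpow [0] n else wpow [1] n)"
  assumes "set P \<subseteq> {0,1}"
  shows "(wpow [0] n @ subst h P @ wpow [1] n, wpow (wpow [0] n @ wpow [1] n) (Suc (c10 P))) \<in> T"
  using assms(2)
proof (induct P rule: c10.induct)
  case (1 a b xs)
  let ?X = "wpow [0] n" and ?Y = "wpow [1] n"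
  have IH: "(?X @ subst h (b#xs) @ ?Y, wpow (?X @ ?Y) (Suc (c10 (b#xs)))) \<in> T"
  proof -
    have "set (b#xs) \<subseteq> {0,1}" using 1(2) by simp
    from 1(1)[OF this] show ?thesis by simp
  qed
  have a: "a = 0 \<or> a = 1" and b: "b = 0 \<or> b = 1" using 1(2) by auto
  show ?case
  proof (cases "a = 0")
    case True
    have "(?X @ ?X @ (subst h (b#xs) @ ?Y), ?X @ (subst h (b#xs) @ ?Y)) \<in> T"
      using ctxR[OF XX[of "[0]"]] by simp
    from trans'[OF this IH] show ?thesis using True by (simp add: h_def)
  next
    case False
    then have a1: "a = 1" using a by simp
    show ?thesis
    proof (cases "b = 1")
      case True
      have "(?X @ ?Y @ ?Y @ (subst h xs @ ?Y), ?X @ ?Y @ (subst h xs @ ?Y)) \<in> T"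
        using ctx[OF XX[of "[1]"], of ?X] by simp
      moreover have "?X @ ?Y @ (subst h xs @ ?Y) = ?X @ subst h (b#xs) @ ?Y"
        using True by (simp add: h_def)
      ultimately have "(?X @ ?Y @ ?Y @ (subst h xs @ ?Y), ?X @ subst h (b#xs) @ ?Y) \<in> T" by simp
      from trans'[OF this IH] show ?thesis using True a1 by (simp add: h_def)
    next
      case False
      then have b0: "b = 0" using b by simp
      have IH': "(?X @ ?X @ subst h xs @ ?Y, wpow (?X @ ?Y) (Suc (c10 (0#xs)))) \<in> T"
        using IH b0 by (simp add: h_def)
      have "(?X @ (subst h xs @ ?Y), ?X @ ?X @ (subst h xs @ ?Y)) \<in> T"
        using sym'[OF ctxR[OF XX[of "[0]"]]] by simp
      then have "(?X @ subst h xs @ ?Y, wpow (?X @ ?Y) (Suc (c10 (0#xs)))) \<in> T"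
        using trans'[OF _ IH'] by simp
      then have "((?X @ ?Y) @ ?X @ subst h xs @ ?Y, (?X @ ?Y) @ wpow (?X @ ?Y) (Suc (c10 (0#xs)))) \<in> T"
        by (rule ctxL)
      then show ?thesis using a1 b0 by (simp add: h_def)
    qed
  qed
next
  case "2_1"
  then show ?case by (simp add: rfl)
next
  case ("2_2" a)
  then have "a = 0 \<or> a = 1" by auto
  then show ?case
  proof
    assume "a = 0"
    then show ?thesis using ctxR[OF XX[of "[0]"], of "wpow [1] n"] by (simp add: h_def)
  next
    assume "a = 1"
    then show ?thesis using ctxL[OF XX[of "[1]"], of "wpow [0] n"] by (simp add: h_def)
  qed
qed

end
end

lemma sorted_rem: "sorted (remdups_adj w) = sorted w"
  by (induct w rule: remdups_adj.induct) auto

lemma distinct_rem: "sorted w \<Longrightarrow> distinct (remdups_adj w)"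
proof (induct w rule: remdups_adj.induct)
  case (3 x y xs)
  then show ?case by (auto simp: less_le)
qed auto

lemma rem_sorted_eq: "sorted a \<Longrightarrow> sorted b \<Longrightarrow> set a = set b \<Longrightarrow> remdups_adj a = remdups_adj b"
  by (rule sorted_distinct_set_unique) (auto simp: sorted_rem distinct_rem)

lemma rem_appL: "remdups_adj (xs @ ys) = remdups_adj (remdups_adj xs @ ys)"
proof (induct xs rule: remdups_adj.induct)
  case (2 x)
  then show ?case by simp
next
  case (3 x y xs)
  then show ?case
    by (cases "x = y") (simp_all, metis remdups_adj_Cons_alt append_Cons remdups_adj.simps(3) list.sel(1) hd_remdups_adj)
qed simp

lemma rem_appR: "remdups_adj (xs @ ys) = remdups_adj (xs @ remdups_adj ys)"
  using rem_appL[of "rev ys" "rev xs"] by (metis remdups_adj_rev rev_append rev_rev_ident)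

lemma gamma_ctx: assumes "gamma a b" shows "gamma (p @ a @ s) (p @ b @ s)"
proof -
  have r: "remdups_adj a = remdups_adj b" using assms by (simp add: gamma_def)
  have "remdups_adj (p @ a @ s) = remdups_adj (p @ b @ s)"
    by (metis r rem_appL rem_appR)
  moreover have s: "set a = set b" by (metis r remdups_adj_set)
  have c1: "count_list a c = 1 \<longleftrightarrow> count_list b c = 1" for c
    using assms by (auto simp: gamma_def simple_letters_def set_eq_iff)
  have c0: "count_list a c = 0 \<longleftrightarrow> count_list b c = 0" for c
    using s by (simp add: count_list_0_iff)
  have "count_list (p @ a @ s) c = 1 \<longleftrightarrow> count_list (p @ b @ s) c = 1" for c
    using c1[of c] c0[of c] unfolding count_list_append by presburger
  then have "simple_letters (p @ a @ s) = simple_letters (p @ b @ s)"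
    unfolding simple_letters_def by blast
  ultimately show ?thesis unfolding gamma_def by blast
qed


lemma gamma_sym: "gamma a b \<Longrightarrow> gamma b a" by (auto simp: gamma_def)
lemma gamma_trans: "gamma a b \<Longrightarrow> gamma b c \<Longrightarrow> gamma a c" by (auto simp: gamma_def)

lemma nonzero_gamma: "gamma a b \<Longrightarrow> MW_nonzero a \<Longrightarrow> MW_nonzero b"
proof -
  assume ab: "gamma a b" and "MW_nonzero a"
  then obtain p s where g: "gamma [0,0,1,1] (p @ a @ s)" unfolding MW_nonzero_def by blast
  have "gamma [0,0,1,1] (p @ b @ s)" using gamma_trans[OF g gamma_ctx[OF ab]] .
  then show "MW_nonzero b" unfolding MW_nonzero_def by blast
qed

lemma nonzero_shape:
  assumes "MW_nonzero A" shows "set A \<subseteq> {0,1}" "sorted A"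
proof -
  obtain p s where g: "gamma [0,0,1,1] (p @ A @ s)" using assms unfolding MW_nonzero_def by blast
  then have "remdups_adj [0,0,1,1] = remdups_adj (p @ A @ s)" unfolding gamma_def by (rule conjunct2)
  then have r: "remdups_adj (p @ A @ s) = [0,1]" by simp
  have "set (p @ A @ s) = set (remdups_adj (p @ A @ s))" by (simp only: remdups_adj_set)
  also have "\<dots> = {0,1}" using r by simp
  finally have eq: "set (p @ A @ s) = {0,1}" .
  have sb: "set A \<subseteq> set (p @ A @ s)" by (simp only: set_append) blast
  from sb show "set A \<subseteq> {0,1}" unfolding eq .
  have "sorted (remdups_adj (p @ A @ s))" unfolding r by simp
  then have "sorted (p @ A @ s)" unfolding sorted_rem .
  then have "sorted (A @ s)" by (metis sorted_append)
  then show "sorted A" by (metis sorted_append)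
qed

theorem lemma4p1:
  fixes T :: "(word \<times> word) set" and n :: nat
  assumes "fully_invariant_congruence T"
    and "1 \<le> n"
    and "(wpow [0] n, wpow [0] (n + 1)) \<in> T"
    and "\<not> MW_in T"
  shows "(wpow [0] n @ wpow [1] n, wpow (wpow [0] n @ wpow [1] n) n) \<in> T"
proof -
  interpret fic T using assms(1) by (rule fic.intro)
  note H = assms(3)
  define E where "E = wpow [0] n @ wpow [1] n"
  obtain u v where uv: "(u,v) \<in> T" "\<not> MW_satisfies u v"
    using assms(4) unfolding MW_in_def by auto
  then obtain \<sigma> where ne: "\<not> MW_eq (subst \<sigma> u) (subst \<sigma> v)"
    unfolding MW_satisfies_def by auto
  have T0: "(subst \<sigma> u, subst \<sigma> v) \<in> T" using sub[OF uv(1)] .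
  obtain A B where AB: "(A,B) \<in> T" "MW_nonzero A" "\<not> gamma A B"
  proof (cases "MW_nonzero (subst \<sigma> u)")
    case True
    then have "\<not> gamma (subst \<sigma> u) (subst \<sigma> v)"
      using ne nonzero_gamma unfolding MW_eq_def by blast
    then show ?thesis using that T0 True by blast
  next
    case False
    then have nz: "MW_nonzero (subst \<sigma> v)" using ne unfolding MW_eq_def by blast
    then have "\<not> gamma (subst \<sigma> v) (subst \<sigma> u)"
      using False nonzero_gamma by blast
    then show ?thesis using that sym'[OF T0] nz by blast
  qed
  have Aset: "set A \<subseteq> {0,1}" and Asort: "sorted A" using nonzero_shape[OF AB(2)] by auto
  show ?thesis
  proof (cases "\<exists>c. count_list A c \<noteq> count_list B c \<and> (count_list A c \<le> 1 \<or> count_list B c \<le> 1)")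
    case True
    then obtain c where c: "count_list A c \<noteq> count_list B c" "count_list A c \<le> 1 \<or> count_list B c \<le> 1"
      by blast
    have P: "(wpow E (count_list A c), wpow E (count_list B c)) \<in> T"
      using sub[OF AB(1), of "\<lambda>d. if d = c then E else []"] unfolding subst_count .
    show ?thesis
    proof (cases "count_list A c < count_list B c")
      case True
      then have "count_list A c \<le> 1" using c(2) by linarith
      from pow_red[OF H P True this] show ?thesis unfolding E_def .
    next
      case False
      then have lt: "count_list B c < count_list A c" using c(1) by linarith
      then have "count_list B c \<le> 1" using c(2) by linarith
      from pow_red[OF H sym'[OF P] lt this] show ?thesis unfolding E_def .
    qed
  next
    case False
    have cc: "count_list A c = count_list B c \<or> (count_list A c \<ge> 2 \<and> count_list B c \<ge> 2)" for c
    proof -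
      have "\<not> (count_list A c \<noteq> count_list B c \<and> (count_list A c \<le> 1 \<or> count_list B c \<le> 1))"
        using False by blast
      then show ?thesis by presburger
    qed
    have sAB: "set A = set B"
    proof -
      have "count_list A c = 0 \<longleftrightarrow> count_list B c = 0" for c using cc[of c] by auto
      then show ?thesis by (auto simp: count_list_0_iff)
    qed
    have "count_list A x = 1 \<longleftrightarrow> count_list B x = 1" for x using cc[of x] by auto
    then have "simple_letters A = simple_letters B"
      unfolding simple_letters_def by blast
    then have rne: "remdups_adj A \<noteq> remdups_adj B" using AB(3) by (simp add: gamma_def)
    have Bset: "set B \<subseteq> {0,1}" using Aset sAB by simp
    have "\<not> sorted B" using rem_sorted_eq[OF Asort _ sAB] rne by blast
    then have cB: "c10 B \<noteq> 0" using c10_sorted[OF Bset] by simp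
    have cA: "c10 A = 0" using c10_sorted[OF Aset] Asort by simp
    define h where "h = (\<lambda>c::nat. if c = 0 then wpow [0] n else wpow [1] n)"
    have 1: "(wpow [0] n @ subst h A @ wpow [1] n, E) \<in> T"
      using chain[OF H Aset] unfolding cA wpow_1 h_def E_def .
    have 2: "(wpow [0] n @ subst h B @ wpow [1] n, wpow E (Suc (c10 B))) \<in> T"
      using chain[OF H Bset] unfolding h_def E_def .
    have 3: "(wpow [0] n @ subst h A @ wpow [1] n, wpow [0] n @ subst h B @ wpow [1] n) \<in> T"
      using ctx[OF sub[OF AB(1)]] .
    have "(E, wpow E (Suc (c10 B))) \<in> T" using trans'[OF trans'[OF sym'[OF 1] 3] 2] .
    then have W: "(wpow E 1, wpow E (Suc (c10 B))) \<in> T" by (simp only: wpow_1 One_nat_def)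
    have lt: "1 < Suc (c10 B)" using cB by simp
    from pow_red[OF H W lt order_refl] show ?thesis unfolding E_def .
  qed
qed

end
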